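(* Fix $\gamma>0$ and $b\in(0,1)$, and let $u(x)$ be the germ at $x=0$ with $u(0)=0$ determined by $u=x\bigl(1+\gamma u\log(1-bu)\bigr)$, where $\log(1-bu)$ is the branch with $\log(1-bu)\sim-bu$ as $u\to0$. Let $\rho_*$ be the radius of analyticity of this germ. Then $1-bu(x)\neq0$ for $|x|<\rho_*$, so the logarithm continued from $0$ defines a holomorphic function $\ell(x)=\log(1-bu(x))$ on $|x|<\rho_*$ with $x=u(x)/(1+\gamma u(x)\ell(x))$. If $\rho_*<\infty$, then every boundary point $x_0$ with $|x_0|=\rho_*$ across which the germ does not continue analytically satisfies: there exist $u_0\in\mathbb C\setminus\{0,1/b\}$ and a local holomorphic branch $\ell_u$ of $\log(1-bu)$ near $u_0$ (a limit of values $\ell(x_n)$ along some sequence $x_n\to x_0$ with $u(x_n)\to u_0$) such that, with $X_{\ell_u}(u)=u/(1+\gamma u\,\ell_u(u))$, one has $X_{\ell_u}(u_0)=x_0\ne0$ and $X'_{\ell_u}(u_0)=0$. *)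

theory Defs
  imports "HOL-Complex_Analysis.Complex_Analysis"
begin

text \<open>A germ at 0 of a solution of u = x (1 + gamma u log(1 - b u)) with u(0) = 0,
  where the logarithm is the principal branch Ln (which satisfies Ln(1 - b u) ~ - b u
  as u tends to 0).\<close>
definition is_sol_germ :: "real \<Rightarrow> real \<Rightarrow> (complex \<Rightarrow> complex) \<Rightarrow> bool" where
  "is_sol_germ \<gamma> b u \<longleftrightarrow> u 0 = 0 \<and>
     (\<exists>\<epsilon>>0. u holomorphic_on ball 0 \<epsilon> \<and>
        (\<forall>x\<in>ball 0 \<epsilon>. u x = x * (1 + of_real \<gamma> * u x * Ln (1 - of_real b * u x))))"

definition analytic_radius :: "(complex \<Rightarrow> complex) \<Rightarrow> ereal" where
  "analytic_radius u = Sup {ereal r | r. r > 0 \<and> (\<exists>f. f holomorphic_on ball 0 r \<and>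
       (\<exists>\<delta>>0. \<forall>x\<in>ball 0 \<delta>. f x = u x))}"

definition edisc :: "ereal \<Rightarrow> complex set" where
  "edisc \<rho> = {x. ereal (cmod x) < \<rho>}"

end

theory Submission
  imports Defs
begin

lemma exp_close_eq:
  fixes a c :: complex
  assumes "exp a = exp c" "norm (a - c) < 2 * pi"
  shows "a = c"
proof -
  obtain n :: int where n: "a = c + (of_int (2 * n) * pi) * \<i>"
    using assms(1) exp_eq by blast
  have "norm (a - c) = \<bar>2 * real_of_int n\<bar> * pi"
    using n by (simp add: norm_mult abs_mult)
  with assms(2) have "\<bar>real_of_int n\<bar> < 1" by (simp add: abs_mult)
  then have "n = 0" by linarith
  with n show ?thesis by simp
qed

lemma log_diff_const:
  fixes f g :: "complex \<Rightarrow> complex"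
  assumes S: "connected S" and cf: "continuous_on S f" and cg: "continuous_on S g"
    and e: "\<And>x. x \<in> S \<Longrightarrow> exp (f x) = exp (g x)"
  shows "\<exists>c. \<forall>x\<in>S. f x = g x + c"
proof -
  have "(\<lambda>x. f x - g x) constant_on S"
  proof (rule continuous_discrete_range_constant[OF S])
    show "continuous_on S (\<lambda>x. f x - g x)" using cf cg by (intro continuous_intros)
    fix x assume x: "x \<in> S"
    show "\<exists>e>0. \<forall>y. y \<in> S \<and> f y - g y \<noteq> f x - g x \<longrightarrow> e \<le> norm (f y - g y - (f x - g x))"
    proof (intro exI[of _ "2*pi"] conjI allI impI)
      show "0 < 2 * pi" by simp
      fix y assume y: "y \<in> S \<and> f y - g y \<noteq> f x - g x"
      have "exp (f y - g y) = exp (f x - g x)"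
        using e[of x] e[of y] x y by (simp add: exp_diff)
      then have "\<not> norm ((f y - g y) - (f x - g x)) < 2 * pi"
        using exp_close_eq y by blast
      then show "2 * pi \<le> norm (f y - g y - (f x - g x))" by simp
    qed
  qed
  then obtain c where "\<forall>x\<in>S. f x - g x = c" unfolding constant_on_def by blast
  then show ?thesis by (metis add.commute diff_eq_eq)
qed

lemma edisc_finite: "edisc (ereal R) = ball 0 R"
  by (auto simp: edisc_def)

lemma edisc_infty: "edisc \<infinity> = UNIV"
  by (auto simp: edisc_def)

lemma edisc_open: "open (edisc \<rho>)"
proof (cases \<rho>)
  case (real r) then show ?thesis by (simp add: edisc_finite)
next
  case PInf then show ?thesis by (simp add: edisc_infty)
next
  case MInf then show ?thesis by (simp add: edisc_def)
qed

lemma edisc_convex: "convex (edisc \<rho>)"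
proof (cases \<rho>)
  case (real r) then show ?thesis by (simp add: edisc_finite)
next
  case PInf then show ?thesis by (simp add: edisc_infty)
next
  case MInf then show ?thesis by (simp add: edisc_def)
qed

lemma edisc_mono: "x \<in> edisc \<rho> \<Longrightarrow> norm y \<le> norm x \<Longrightarrow> y \<in> edisc \<rho>"
proof -
  assume a: "x \<in> edisc \<rho>" "norm y \<le> norm x"
  then have "ereal (norm y) \<le> ereal (norm x)" by simp
  with a show ?thesis unfolding edisc_def
    using order.strict_trans1[of "ereal (norm y)" "ereal (norm x)" \<rho>] by simp
qed

lemma edisc_zero: "\<rho> > 0 \<Longrightarrow> 0 \<in> edisc \<rho>"
  unfolding edisc_def by (metis mem_Collect_eq norm_zero zero_ereal_def)

lemma germ_continuation:
  assumes "is_sol_germ \<gamma> b u"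
  shows "analytic_radius u > 0 \<and> (\<exists>U. U holomorphic_on edisc (analytic_radius u) \<and>
           (\<exists>\<delta>>0. \<forall>x\<in>ball 0 \<delta>. U x = u x))"
proof -
  define P where "P = (\<lambda>r f. f holomorphic_on ball 0 r \<and> (\<exists>\<delta>>0. \<forall>x\<in>ball 0 \<delta>. f x = u x))"
  define Rs where "Rs = {r::real. r > 0 \<and> (\<exists>f. P r f)}"
  have rad: "analytic_radius u = Sup (ereal ` Rs)"
    unfolding analytic_radius_def Rs_def P_def by (rule arg_cong[where f=Sup]) auto
  obtain \<epsilon> where \<epsilon>: "\<epsilon> > 0" "u holomorphic_on ball 0 \<epsilon>"
    using assms unfolding is_sol_germ_def by blast
  have "\<epsilon> \<in> Rs" unfolding Rs_def P_def using \<epsilon> by blast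
  then have "ereal \<epsilon> \<le> analytic_radius u" unfolding rad by (simp add: Sup_upper)
  with \<epsilon> have pos: "analytic_radius u > 0"
    by (metis ereal_less(2) order_less_le_trans)
  define F where "F = (\<lambda>r. SOME f. P r f)"
  have FP: "P r (F r)" if "r \<in> Rs" for r
    using that unfolding Rs_def F_def by (metis (mono_tags, lifting) mem_Collect_eq someI_ex)
  have Funiq: "F r1 x = F r2 x" if hr: "r1 \<in> Rs" "r2 \<in> Rs" "norm x < min r1 r2" for r1 r2 x
  proof -
    obtain d1 where d1: "d1 > 0" "\<forall>x\<in>ball 0 d1. F r1 x = u x"
      using FP[OF hr(1)] unfolding P_def by blast
    obtain d2 where d2: "d2 > 0" "\<forall>x\<in>ball 0 d2. F r2 x = u x"
      using FP[OF hr(2)] unfolding P_def by blast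
    have h1: "F r1 holomorphic_on ball 0 (min r1 r2)"
      using FP[OF hr(1)] unfolding P_def by (rule conjE) (auto intro: holomorphic_on_subset)
    have h2: "F r2 holomorphic_on ball 0 (min r1 r2)"
      using FP[OF hr(2)] unfolding P_def by (rule conjE) (auto intro: holomorphic_on_subset)
    have r12: "r1 > 0" "r2 > 0" using hr unfolding Rs_def by auto
    show ?thesis
    proof (rule analytic_continuation_open[of "ball 0 (min (min d1 d2) (min r1 r2))" "ball 0 (min r1 r2)" "F r1" "F r2"])
      show "ball 0 (min (min d1 d2) (min r1 r2)) \<noteq> {}" using d1 d2 r12 by simp
      show "ball 0 (min (min d1 d2) (min r1 r2)) \<subseteq> ball 0 (min r1 r2)" by auto
      show "\<And>z. z \<in> ball 0 (min (min d1 d2) (min r1 r2)) \<Longrightarrow> F r1 z = F r2 z"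
        using d1(2) d2(2) by auto
      show "x \<in> ball 0 (min r1 r2)" using hr(3) by simp
    qed (use h1 h2 in auto)
  qed
  define U where "U = (\<lambda>x. F (SOME r. r \<in> Rs \<and> norm x < r) x)"
  have inR: "\<exists>r. r \<in> Rs \<and> norm x < r" if "x \<in> edisc (analytic_radius u)" for x
  proof -
    have "ereal (norm x) < Sup (ereal ` Rs)" using that unfolding edisc_def rad by simp
    then obtain r where "r \<in> Rs" "ereal (norm x) < ereal r" by (auto simp: less_Sup_iff)
    then show ?thesis by auto
  qed
  have UF: "U x = F r x" if "r \<in> Rs" "norm x < r" for r x
  proof -
    define r' where "r' = (SOME r. r \<in> Rs \<and> norm x < r)"
    have "r' \<in> Rs \<and> norm x < r'" unfolding r'_def by (rule someI[of _ r]) (use that in auto)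
    then have "F r' x = F r x" using Funiq[of r' r x] that by auto
    then show ?thesis unfolding U_def r'_def by simp
  qed
  have "U analytic_on edisc (analytic_radius u)"
    unfolding analytic_on_def
  proof
    fix x assume x: "x \<in> edisc (analytic_radius u)"
    then obtain r where r: "r \<in> Rs" "norm x < r" using inR by blast
    have sub: "ball x (r - norm x) \<subseteq> ball 0 r"
    proof
      fix y assume "y \<in> ball x (r - norm x)"
      then have "dist x y < r - norm x" by simp
      moreover have "dist 0 y \<le> dist 0 x + dist x y" by (rule dist_triangle)
      ultimately show "y \<in> ball 0 r" by simp
    qed
    have "F r holomorphic_on ball x (r - norm x)"
      using FP[OF r(1)] sub unfolding P_def by (auto intro: holomorphic_on_subset)
    moreover have "\<And>y. y \<in> ball x (r - norm x) \<Longrightarrow> U y = F r y"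
      using UF[OF r(1)] sub by auto
    ultimately have "U holomorphic_on ball x (r - norm x)"
      using holomorphic_cong by (metis (no_types, lifting))
    then show "\<exists>e>0. U holomorphic_on ball x e" using r by (intro exI[of _ "r - norm x"]) auto
  qed
  then have "U holomorphic_on edisc (analytic_radius u)"
    by (simp add: analytic_imp_holomorphic)
  moreover have "\<exists>\<delta>>0. \<forall>x\<in>ball 0 \<delta>. U x = u x"
  proof -
    obtain d where d: "d > 0" "\<forall>x\<in>ball 0 d. F \<epsilon> x = u x"
      using FP[OF \<open>\<epsilon> \<in> Rs\<close>] unfolding P_def by blast
    show ?thesis using d \<epsilon> UF[OF \<open>\<epsilon> \<in> Rs\<close>]
      by (intro exI[of _ "min d \<epsilon>"]) auto
  qed
  ultimately show ?thesis using pos by blast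
qed

lemma Re_pos_not_nonpos: "Re z > 0 \<Longrightarrow> z \<notin> \<real>\<^sub>\<le>\<^sub>0"
  by (auto simp: complex_nonpos_Reals_iff)

lemma small_not_nonpos:
  fixes b :: real and w :: complex
  assumes "b > 0" "norm w < 1 / b"
  shows "1 - of_real b * w \<notin> \<real>\<^sub>\<le>\<^sub>0" "1 - of_real b * w \<noteq> 0"
proof -
  have "norm (of_real b * w) < 1" using assms by (simp add: norm_mult field_simps)
  then have "Re (of_real b * w) < 1" using complex_Re_le_cmod le_less_trans by blast
  then have "Re (1 - of_real b * w) > 0" by simp
  then show "1 - of_real b * w \<notin> \<real>\<^sub>\<le>\<^sub>0" using Re_pos_not_nonpos by blast
  show "1 - of_real b * w \<noteq> 0" using \<open>Re (1 - of_real b * w) > 0\<close> by force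
qed

lemma log_relation:
  fixes \<gamma> b :: real and U :: "complex \<Rightarrow> complex"
  assumes b: "b > 0" and hol: "U holomorphic_on S" and S: "convex S" "open S" "0 \<in> S"
    and nz: "\<And>x. x \<in> S \<Longrightarrow> 1 - of_real b * U x \<noteq> 0"
    and U0: "U 0 = 0"
    and eq0: "\<exists>\<delta>>0. \<forall>x\<in>ball 0 \<delta>. U x = x * (1 + of_real \<gamma> * U x * Ln (1 - of_real b * U x))"
  shows "\<exists>L. L holomorphic_on S \<and> L 0 = 0 \<and>
     (\<forall>x\<in>S. exp (L x) = 1 - of_real b * U x \<and> U x = x * (1 + of_real \<gamma> * U x * L x))"
proof -
  have h1: "(\<lambda>x. 1 - of_real b * U x) holomorphic_on S" using hol by (intro holomorphic_intros)
  obtain g where g: "g holomorphic_on S" "\<And>x. x \<in> S \<Longrightarrow> exp (g x) = 1 - of_real b * U x"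
    using holomorphic_logarithm_exists[OF S(1,2) h1 nz S(3)] by blast
  define L where "L = (\<lambda>x. g x - g 0)"
  have g0: "exp (g 0) = 1" using g(2)[OF S(3)] U0 by simp
  have Lhol: "L holomorphic_on S" unfolding L_def using g(1) by (intro holomorphic_intros)
  have Lexp: "exp (L x) = 1 - of_real b * U x" if "x \<in> S" for x
    unfolding L_def using g(2)[OF that] g0 by (simp add: exp_diff)
  have L0: "L 0 = 0" unfolding L_def by simp
  obtain \<delta> where \<delta>: "\<delta> > 0" "\<forall>x\<in>ball 0 \<delta>. U x = x * (1 + of_real \<gamma> * U x * Ln (1 - of_real b * U x))"
    using eq0 by blast
  have cU: "continuous_on S U" using hol by (rule holomorphic_on_imp_continuous_on)
  have "open (S \<inter> U -` ball 0 (1/b))" by (rule continuous_open_preimage[OF cU S(2)]) simp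
  moreover have "0 \<in> S \<inter> U -` ball 0 (1/b)" using S(3) U0 b by simp
  ultimately obtain \<eta> where \<eta>: "\<eta> > 0" "ball 0 \<eta> \<subseteq> S \<inter> U -` ball 0 (1/b)"
    by (meson openE)
  define B where "B = ball (0::complex) (min \<eta> \<delta>)"
  have BS: "B \<subseteq> S" using \<eta> unfolding B_def by auto
  have Bsmall: "norm (U x) < 1 / b" if "x \<in> B" for x
    using \<eta>(2) that unfolding B_def by auto
  have cL: "continuous_on B L"
    using holomorphic_on_imp_continuous_on[OF Lhol] BS continuous_on_subset by blast
  have cLn: "continuous_on B (\<lambda>x. Ln (1 - of_real b * U x))"
    using cU BS small_not_nonpos[OF b Bsmall]
    by (intro continuous_intros) (auto intro: continuous_on_subset)
  have "\<exists>c. \<forall>x\<in>B. L x = Ln (1 - of_real b * U x) + c"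
  proof (rule log_diff_const[OF _ cL cLn])
    show "connected B" unfolding B_def by simp
    fix x assume "x \<in> B"
    then show "exp (L x) = exp (Ln (1 - of_real b * U x))"
      using Lexp BS small_not_nonpos(2)[OF b Bsmall] by auto
  qed
  then obtain c where c: "\<forall>x\<in>B. L x = Ln (1 - of_real b * U x) + c" by blast
  have "0 \<in> B" unfolding B_def using \<eta> \<delta> by simp
  then have "c = 0" using c L0 U0 by force
  with c have LB: "\<forall>x\<in>B. L x = Ln (1 - of_real b * U x)" by simp
  have rel: "U x = x * (1 + of_real \<gamma> * U x * L x)" if "x \<in> S" for x
  proof (rule analytic_continuation_open[of B S U "\<lambda>x. x * (1 + of_real \<gamma> * U x * L x)"])
    show "open B" "B \<noteq> {}" "B \<subseteq> S" using BS \<open>0 \<in> B\<close> unfolding B_def by auto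
    show "open S" "connected S" using S by (auto simp: convex_connected)
    show "U holomorphic_on S" by (rule hol)
    show "(\<lambda>x. x * (1 + of_real \<gamma> * U x * L x)) holomorphic_on S"
      using hol Lhol by (intro holomorphic_intros)
    show "\<And>z. z \<in> B \<Longrightarrow> U z = z * (1 + of_real \<gamma> * U z * L z)"
      using LB \<delta>(2) unfolding B_def by auto
    show "x \<in> S" by (rule that)
  qed
  show ?thesis using Lhol L0 Lexp rel by blast
qed

lemma seq_to_point: "(\<lambda>n. of_real (1 - 1 / (real n + 2)) * z) \<longlonglongrightarrow> (z::complex)"
proof -
  have "(\<lambda>n. 1 / real n) \<longlonglongrightarrow> 0" by (rule lim_const_over_n)
  then have "(\<lambda>n. 1 / real (n + 2)) \<longlonglongrightarrow> 0" by (rule LIMSEQ_ignore_initial_segment)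
  then have "(\<lambda>n. 1 / (real n + 2)) \<longlonglongrightarrow> 0" by (simp add: add.commute)
  then have "(\<lambda>n. of_real (1 - 1 / (real n + 2)) * z) \<longlonglongrightarrow> of_real (1 - 0) * z"
    by (intro tendsto_intros)
  then show ?thesis by simp
qed

lemma L_formula:
  fixes \<gamma> :: real and x U L :: complex
  assumes "\<gamma> > 0" "x \<noteq> 0" "U \<noteq> 0" "U = x * (1 + of_real \<gamma> * U * L)"
  shows "L = (U / x - 1) / (of_real \<gamma> * U)"
proof -
  have "U / x = (x * (1 + of_real \<gamma> * U * L)) / x" using assms(4) by simp
  also have "\<dots> = 1 + of_real \<gamma> * U * L" using assms(2) by simp
  finally have "U / x - 1 = (of_real \<gamma> * U) * L" by (simp add: algebra_simps)
  moreover have "of_real \<gamma> * U \<noteq> 0" using assms(1,3) by simp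
  ultimately show ?thesis by (simp add: field_simps)
qed

lemma nonvanishing:
  fixes \<gamma> b :: real and U :: "complex \<Rightarrow> complex"
  assumes g: "\<gamma> > 0" and b: "b > 0" and hol: "U holomorphic_on edisc \<rho>" and rho: "\<rho> > 0"
    and U0: "U 0 = 0"
    and eq0: "\<exists>\<delta>>0. \<forall>x\<in>ball 0 \<delta>. U x = x * (1 + of_real \<gamma> * U x * Ln (1 - of_real b * U x))"
  shows "\<forall>x\<in>edisc \<rho>. 1 - of_real b * U x \<noteq> 0"
proof (rule ccontr)
  define D where "D = edisc \<rho>"
  assume "\<not> (\<forall>x\<in>edisc \<rho>. 1 - of_real b * U x \<noteq> 0)"
  then obtain z where z: "z \<in> D" "1 - of_real b * U z = 0" unfolding D_def by blast
  define K where "K = cball 0 (norm z) \<inter> (\<lambda>x. 1 - of_real b * U x) -` {0}"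
  have cD: "cball 0 (norm z) \<subseteq> D" using z(1) edisc_mono unfolding D_def by auto
  have cU: "continuous_on D U" using hol unfolding D_def by (rule holomorphic_on_imp_continuous_on)
  have "continuous_on (cball 0 (norm z)) (\<lambda>x. 1 - of_real b * U x)"
    using cU cD by (intro continuous_intros) (auto intro: continuous_on_subset)
  then have "closed K" unfolding K_def by (rule continuous_closed_preimage) auto
  moreover have "bounded K" unfolding K_def by (meson bounded_Int bounded_cball)
  ultimately have "compact K" by (simp add: compact_eq_bounded_closed)
  moreover have "z \<in> K" using z unfolding K_def by auto
  ultimately obtain z1 where z1: "z1 \<in> K" "\<And>y. y \<in> K \<Longrightarrow> norm z1 \<le> norm y"
    using continuous_attains_inf[of K norm] by (auto intro: continuous_intros)
  have z1D: "z1 \<in> D" using z1(1) cD unfolding K_def by auto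
  have z1z: "1 - of_real b * U z1 = 0" using z1(1) unfolding K_def by auto
  have "z1 \<noteq> 0" using z1z U0 by auto
  define S where "S = ball (0::complex) (norm z1)"
  have SD: "S \<subseteq> D"
  proof
    fix y assume "y \<in> S"
    then have "norm y \<le> norm z1" unfolding S_def by simp
    then show "y \<in> D" using z1D edisc_mono unfolding D_def by blast
  qed
  have Snz: "1 - of_real b * U y \<noteq> 0" if "y \<in> S" for y
  proof
    assume "1 - of_real b * U y = 0"
    moreover have "norm y \<le> norm z" using that z1(1) unfolding S_def K_def by auto
    ultimately have "y \<in> K" unfolding K_def by auto
    then have "norm z1 \<le> norm y" by (rule z1(2))
    with that show False unfolding S_def by simp
  qed
  have "0 \<in> S" unfolding S_def using \<open>z1 \<noteq> 0\<close> by simp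
  obtain L where L: "L holomorphic_on S" "L 0 = 0"
      "\<forall>x\<in>S. exp (L x) = 1 - of_real b * U x \<and> U x = x * (1 + of_real \<gamma> * U x * L x)"
    using log_relation[OF b _ _ _ \<open>0 \<in> S\<close> Snz U0 eq0] hol SD unfolding D_def S_def
    by (meson convex_ball holomorphic_on_subset open_ball)
  define xs where "xs = (\<lambda>n. of_real (1 - 1 / (real n + 2)) * z1)"
  have xsS: "xs n \<in> S" and xs0: "xs n \<noteq> 0" for n
  proof -
    define t where "t = 1 - 1 / (real n + 2)"
    have t: "0 < t" "t < 1" unfolding t_def by (auto simp: field_simps)
    have "norm (xs n) = t * norm z1" unfolding xs_def t_def[symmetric] norm_mult norm_of_real
      using t by simp
    then show "xs n \<in> S" "xs n \<noteq> 0" unfolding S_def using \<open>z1 \<noteq> 0\<close> t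
      by auto
  qed
  have xslim: "xs \<longlonglongrightarrow> z1" unfolding xs_def by (rule seq_to_point)
  have "isCont U z1"
    using cU z1D edisc_open unfolding D_def by (simp add: continuous_on_eq_continuous_at)
  then have Ulim: "(\<lambda>n. U (xs n)) \<longlonglongrightarrow> U z1" using xslim isCont_tendsto_compose by blast
  have Uz1: "U z1 \<noteq> 0" using z1z by auto
  have ev: "eventually (\<lambda>n. U (xs n) \<noteq> 0) sequentially"
    using tendsto_imp_eventually_ne[OF Ulim Uz1] .
  have "(\<lambda>n. (U (xs n) / xs n - 1) / (of_real \<gamma> * U (xs n))) \<longlonglongrightarrow> (U z1 / z1 - 1) / (of_real \<gamma> * U z1)"
    using Ulim xslim \<open>z1 \<noteq> 0\<close> Uz1 g by (intro tendsto_intros) auto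
  moreover have "eventually (\<lambda>n. (U (xs n) / xs n - 1) / (of_real \<gamma> * U (xs n)) = L (xs n)) sequentially"
    using ev
  proof (rule eventually_mono)
    fix n assume "U (xs n) \<noteq> 0"
    then show "(U (xs n) / xs n - 1) / (of_real \<gamma> * U (xs n)) = L (xs n)"
      using L_formula[OF g xs0] L(3) xsS by metis
  qed
  ultimately have "(\<lambda>n. L (xs n)) \<longlonglongrightarrow> (U z1 / z1 - 1) / (of_real \<gamma> * U z1)"
    by (rule Lim_transform_eventually)
  then have "(\<lambda>n. exp (L (xs n))) \<longlonglongrightarrow> exp ((U z1 / z1 - 1) / (of_real \<gamma> * U z1))"
    by (rule tendsto_exp)
  moreover have "(\<lambda>n. exp (L (xs n))) \<longlonglongrightarrow> 1 - of_real b * U z1"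
  proof -
    have "(\<lambda>n. 1 - of_real b * U (xs n)) \<longlonglongrightarrow> 1 - of_real b * U z1"
      using Ulim by (intro tendsto_intros)
    then show ?thesis using L(3) xsS by simp
  qed
  ultimately have "exp ((U z1 / z1 - 1) / (of_real \<gamma> * U z1)) = 1 - of_real b * U z1"
    by (rule LIMSEQ_unique)
  with z1z show False by simp
qed

lemma seq_to_point': "(\<lambda>n. of_real (1 - s / (real n + 2)) * z) \<longlonglongrightarrow> (z::complex)"
proof -
  have "(\<lambda>n. s / real n) \<longlonglongrightarrow> 0" by (rule lim_const_over_n)
  then have "(\<lambda>n. s / real (n + 2)) \<longlonglongrightarrow> 0" by (rule LIMSEQ_ignore_initial_segment)
  then have "(\<lambda>n. s / (real n + 2)) \<longlonglongrightarrow> 0" by (simp add: add.commute)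
  then have "(\<lambda>n. of_real (1 - s / (real n + 2)) * z) \<longlonglongrightarrow> of_real (1 - 0) * z"
    by (intro tendsto_intros)
  then show ?thesis by simp
qed

lemma inv_formula:
  fixes \<gamma> :: real and x U L :: complex
  assumes "\<gamma> > 0" "x \<noteq> 0" "U \<noteq> 0" "U = x * (1 + of_real \<gamma> * U * L)"
  shows "L = (1 / x - 1 / U) / of_real \<gamma>"
proof -
  have "L = (U / x - 1) / (of_real \<gamma> * U)" by (rule L_formula[OF assms])
  then show ?thesis using assms(1-3) by (simp add: field_simps)
qed

lemma U_nonzero:
  fixes \<gamma> :: real and x U L :: complex
  assumes "x \<noteq> 0" "U = x * (1 + of_real \<gamma> * U * L)"
  shows "U \<noteq> 0"
  using assms by auto

lemma not_to_zero:
  fixes \<gamma> b R :: real and U L :: "complex \<Rightarrow> complex"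
  assumes g: "\<gamma> > 0" and b: "b > 0" and R: "R > 0"
    and Uh: "U holomorphic_on ball 0 R" and Lh: "L holomorphic_on ball 0 R"
    and rel: "\<forall>x\<in>ball 0 R. exp (L x) = 1 - of_real b * U x \<and> U x = x * (1 + of_real \<gamma> * U x * L x)"
    and x0: "norm x0 = R"
  shows "\<exists>\<epsilon>>0. \<forall>\<delta>>0. \<exists>x\<in>ball 0 R. norm (x - x0) < \<delta> \<and> norm (U x) \<ge> \<epsilon>"
proof (rule ccontr)
  assume "\<not> ?thesis"
  then have H: "\<forall>\<epsilon>>0. \<exists>\<delta>>0. \<forall>x\<in>ball 0 R. norm (x - x0) < \<delta> \<longrightarrow> norm (U x) < \<epsilon>"
    by (auto simp: not_le)
  obtain \<delta>1 where \<delta>1: "\<delta>1 > 0" "\<forall>x\<in>ball 0 R. norm (x - x0) < \<delta>1 \<longrightarrow> norm (U x) < 1 / b"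
    using H b by (meson divide_pos_pos zero_less_one)
  define W where "W = ball 0 R \<inter> ball x0 \<delta>1"
  have WR: "W \<subseteq> ball 0 R" unfolding W_def by auto
  have Wsmall: "norm (U x) < 1 / b" if "x \<in> W" for x
    using \<delta>1(2) that unfolding W_def by (auto simp: dist_norm norm_minus_commute)
  have cU: "continuous_on W U"
    using holomorphic_on_imp_continuous_on[OF Uh] WR continuous_on_subset by blast
  have cL: "continuous_on W L"
    using holomorphic_on_imp_continuous_on[OF Lh] WR continuous_on_subset by blast
  have cLn: "continuous_on W (\<lambda>x. Ln (1 - of_real b * U x))"
    using cU small_not_nonpos[OF b Wsmall] by (intro continuous_intros) auto
  have "\<exists>c. \<forall>x\<in>W. L x = Ln (1 - of_real b * U x) + c"
  proof (rule log_diff_const[OF _ cL cLn])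
    show "connected W" unfolding W_def by (simp add: convex_connected convex_Int)
    fix x assume "x \<in> W"
    then show "exp (L x) = exp (Ln (1 - of_real b * U x))"
      using rel WR small_not_nonpos(2)[OF b Wsmall] by auto
  qed
  then obtain c where c: "\<forall>x\<in>W. L x = Ln (1 - of_real b * U x) + c" by blast
  define s where "s = min 1 (\<delta>1 / R) / 2"
  have s: "0 < s" "s < 1" "s * R < \<delta>1" using \<delta>1 R unfolding s_def
    by (auto simp: min_def field_simps)
  define w where "w = (\<lambda>n. of_real (1 - s / (real n + 2)) * x0)"
  have wW: "w n \<in> W" and w0: "w n \<noteq> 0" for n
  proof -
    define t where "t = 1 - s / (real n + 2)"
    have t: "0 < t" "t < 1" unfolding t_def using s by (auto simp: field_simps)
    have "1 - t \<le> s" unfolding t_def using s by (auto simp: field_simps)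
    then have "(1 - t) * R \<le> s * R" using R by (simp add: mult_right_mono)
    with s have "(1 - t) * R < \<delta>1" by linarith
    have nw: "norm (w n) = t * R" unfolding w_def t_def[symmetric] norm_mult norm_of_real
      using t x0 by simp
    have "w n - x0 = of_real (t - 1) * x0" unfolding w_def t_def[symmetric] by (simp add: algebra_simps)
    then have "norm (w n - x0) = \<bar>t - 1\<bar> * R" using x0 by (simp only: norm_mult norm_of_real)
    then have "norm (w n - x0) = (1 - t) * R" using t by simp
    then show "w n \<in> W" unfolding W_def using nw t R \<open>(1 - t) * R < \<delta>1\<close>
      by (auto simp: dist_norm norm_minus_commute)
    show "w n \<noteq> 0" using nw t R by auto
  qed
  have wlim: "w \<longlonglongrightarrow> x0" unfolding w_def by (rule seq_to_point')
  have Ulim: "(\<lambda>n. U (w n)) \<longlonglongrightarrow> 0"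
    unfolding tendsto_iff
  proof (intro allI impI)
    fix e :: real assume "e > 0"
    then obtain d where d: "d > 0" "\<forall>x\<in>ball 0 R. norm (x - x0) < d \<longrightarrow> norm (U x) < e"
      using H by blast
    have "eventually (\<lambda>n. dist (w n) x0 < d) sequentially"
      using wlim d(1) unfolding tendsto_iff by blast
    then show "eventually (\<lambda>n. dist (U (w n)) 0 < e) sequentially"
    proof (rule eventually_mono)
      fix n assume "dist (w n) x0 < d"
      then show "dist (U (w n)) 0 < e" using d(2) wW[of n] WR by (auto simp: dist_norm)
    qed
  qed
  have "(\<lambda>n. Ln (1 - of_real b * U (w n))) \<longlonglongrightarrow> Ln (1 - of_real b * 0)"
    using Ulim by (intro tendsto_intros) auto
  then have Lnlim: "(\<lambda>n. Ln (1 - of_real b * U (w n))) \<longlonglongrightarrow> 0" by simp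
  have Un0: "U (w n) \<noteq> 0" for n using U_nonzero[OF w0] rel wW WR by blast
  have inv: "1 / U (w n) = 1 / w n - of_real \<gamma> * (Ln (1 - of_real b * U (w n)) + c)" for n
  proof -
    have "L (w n) = (1 / w n - 1 / U (w n)) / of_real \<gamma>"
      using inv_formula[OF g w0 Un0] rel wW WR by blast
    then show ?thesis using c wW g by (auto simp: field_simps)
  qed
  have "(\<lambda>n. 1 / w n - of_real \<gamma> * (Ln (1 - of_real b * U (w n)) + c)) \<longlonglongrightarrow> 1 / x0 - of_real \<gamma> * (0 + c)"
    using wlim Lnlim x0 R by (intro tendsto_intros) auto
  then have "(\<lambda>n. 1 / U (w n)) \<longlonglongrightarrow> 1 / x0 - of_real \<gamma> * (0 + c)" using inv by simp
  then have "(\<lambda>n. U (w n) * (1 / U (w n))) \<longlonglongrightarrow> 0 * (1 / x0 - of_real \<gamma> * (0 + c))"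
    using Ulim by (intro tendsto_intros)
  moreover have "(\<lambda>n. U (w n) * (1 / U (w n))) = (\<lambda>n. 1)" using Un0 by simp
  ultimately have "(\<lambda>n. 1::complex) \<longlonglongrightarrow> 0" by simp
  then show False using LIMSEQ_unique[OF tendsto_const] by fastforce
qed

lemma extend_lemma:
  fixes \<gamma> b R :: real and U L Lu Xf :: "complex \<Rightarrow> complex" and ys :: "nat \<Rightarrow> complex"
  assumes g: "\<gamma> > 0" and b: "b > 0" and R: "R > 0"
    and Uh: "U holomorphic_on ball 0 R" and Lh: "L holomorphic_on ball 0 R"
    and rel: "\<forall>x\<in>ball 0 R. exp (L x) = 1 - of_real b * U x \<and> U x = x * (1 + of_real \<gamma> * U x * L x)"
    and ysR: "\<forall>n. ys n \<in> ball 0 R" and yslim: "ys \<longlonglongrightarrow> x0"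
    and Uys: "(\<lambda>n. U (ys n)) \<longlonglongrightarrow> u0" and Lys: "(\<lambda>n. L (ys n)) \<longlonglongrightarrow> l0"
    and V: "open V" "u0 \<in> V" and Luh: "Lu holomorphic_on V"
    and Luexp: "\<forall>w\<in>V. exp (Lu w) = 1 - of_real b * w" and Lu0: "Lu u0 = l0"
    and Xdef: "Xf = (\<lambda>w. w / (1 + of_real \<gamma> * w * Lu w))"
    and den: "\<forall>w\<in>V. 1 + of_real \<gamma> * w * Lu w \<noteq> 0"
    and Xu0: "Xf u0 = x0" and dnz: "deriv Xf u0 \<noteq> 0"
  shows "\<exists>\<epsilon>>0. \<exists>g. g holomorphic_on (ball 0 R \<union> ball x0 \<epsilon>) \<and> (\<forall>x\<in>ball 0 R. g x = U x)"
proof -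
  have Xh: "Xf holomorphic_on V" unfolding Xdef using Luh den by (intro holomorphic_intros) auto
  obtain r where r: "r > 0" "ball u0 r \<subseteq> V" "inj_on Xf (ball u0 r)"
    using has_complex_derivative_locally_injective[OF Xh V(2) V(1) dnz] by blast
  define N where "N = ball u0 r"
  have XN: "Xf holomorphic_on N" using Xh r(2) unfolding N_def by (rule holomorphic_on_subset)
  obtain Y where Y: "Y holomorphic_on (Xf ` N)" "\<And>z. z \<in> N \<Longrightarrow> Y (Xf z) = z"
  proof -
    obtain g where "g holomorphic_on (Xf ` N)" "\<And>z. z \<in> N \<Longrightarrow> g (Xf z) = z"
      using holomorphic_has_inverse[OF XN _ r(3)[folded N_def]] unfolding N_def by blast
    then show ?thesis using that by blast
  qed
  have "open (Xf ` N)" using open_mapping_thm3[OF XN _ r(3)[folded N_def]] unfolding N_def by simp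
  moreover have "x0 \<in> Xf ` N" using Xu0 r(1) unfolding N_def by force
  ultimately obtain \<delta> where \<delta>: "\<delta> > 0" "ball x0 \<delta> \<subseteq> Xf ` N" by (meson openE)
  define W where "W = ball 0 R \<inter> ball x0 \<delta>"
  have WR: "W \<subseteq> ball 0 R" unfolding W_def by auto
  have WX: "W \<subseteq> Xf ` N" using \<delta> unfolding W_def by auto
  have cU: "continuous_on W U"
    using holomorphic_on_imp_continuous_on[OF Uh] WR continuous_on_subset by blast
  have cL: "continuous_on W L"
    using holomorphic_on_imp_continuous_on[OF Lh] WR continuous_on_subset by blast
  have NV: "N \<subseteq> V" using r(2) unfolding N_def .
  have cLu: "continuous_on N Lu"
    using holomorphic_on_imp_continuous_on[OF Luh] NV continuous_on_subset by blast
  define N2 where "N2 = N \<inter> Lu -` ball l0 pi"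
  have oN2: "open N2" unfolding N2_def by (rule continuous_open_preimage[OF cLu]) (auto simp: N_def)
  have u0N2: "u0 \<in> N2" unfolding N2_def N_def using r(1) Lu0 by simp
  have oW: "open W" unfolding W_def by (intro open_Int open_ball)
  define Os where "Os = (W \<inter> U -` N2) \<inter> (W \<inter> L -` ball l0 pi)"
  have oO: "open Os" unfolding Os_def
    by (intro open_Int continuous_open_preimage[OF cU oW oN2] continuous_open_preimage[OF cL oW]) auto
  have "eventually (\<lambda>n. ys n \<in> ball x0 \<delta>) sequentially"
    using topological_tendstoD[OF yslim, of "ball x0 \<delta>"] \<delta>(1) by simp
  moreover have "eventually (\<lambda>n. U (ys n) \<in> N2) sequentially"
    using topological_tendstoD[OF Uys oN2 u0N2] .
  moreover have "eventually (\<lambda>n. L (ys n) \<in> ball l0 pi) sequentially"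
    using topological_tendstoD[OF Lys, of "ball l0 pi"] by simp
  ultimately have "eventually (\<lambda>n. ys n \<in> ball x0 \<delta> \<and> U (ys n) \<in> N2 \<and> L (ys n) \<in> ball l0 pi) sequentially"
    by (simp add: eventually_conj)
  then obtain N0 where "\<forall>n\<ge>N0. ys n \<in> ball x0 \<delta> \<and> U (ys n) \<in> N2 \<and> L (ys n) \<in> ball l0 pi"
    unfolding eventually_sequentially by blast
  then obtain n where "ys n \<in> ball x0 \<delta>" "U (ys n) \<in> N2" "L (ys n) \<in> ball l0 pi"
    by blast
  then have "ys n \<in> Os" unfolding Os_def W_def using ysR by auto
  then have One: "Os \<noteq> {}" by auto
  have OW: "Os \<subseteq> W" unfolding Os_def by auto
  have UY: "U x = Y x" if "x \<in> Os" for x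
  proof -
    have xW: "x \<in> W" and UxN2: "U x \<in> N2" and Lx: "dist l0 (L x) < pi"
      using that unfolding Os_def by auto
    have UxN: "U x \<in> N" and LuU: "dist l0 (Lu (U x)) < pi" using UxN2 unfolding N2_def by auto
    have xR: "x \<in> ball 0 R" using xW WR by auto
    have "exp (L x) = exp (Lu (U x))" using rel xR Luexp UxN NV by auto
    moreover have "norm (L x - Lu (U x)) < 2 * pi"
    proof -
      have "norm (L x - Lu (U x)) \<le> dist l0 (L x) + dist l0 (Lu (U x))"
        by (metis dist_commute dist_norm dist_triangle)
      then show ?thesis using Lx LuU by linarith
    qed
    ultimately have LL: "L x = Lu (U x)" by (rule exp_close_eq)
    have relx: "U x = x * (1 + of_real \<gamma> * U x * L x)" using rel xR by blast
    have dn: "1 + of_real \<gamma> * U x * L x \<noteq> 0"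
    proof
      assume "1 + of_real \<gamma> * U x * L x = 0"
      then have "U x = 0" using relx by simp
      with \<open>1 + of_real \<gamma> * U x * L x = 0\<close> show False by simp
    qed
    have "Xf (U x) = U x / (1 + of_real \<gamma> * U x * L x)" unfolding Xdef LL by simp
    also have "\<dots> = x" using relx dn by (simp add: field_simps)
    finally have "Xf (U x) = x" .
    then show "U x = Y x" using Y(2)[OF UxN] by simp
  qed
  have Yh: "Y holomorphic_on ball x0 \<delta>" using Y(1) \<delta>(2) by (rule holomorphic_on_subset)
  have UYW: "U x = Y x" if "x \<in> W" for x
  proof (rule analytic_continuation_open[of Os W U Y])
    show "open Os" "Os \<noteq> {}" "Os \<subseteq> W" "open W" by (fact oO, fact One, fact OW, fact oW)
    show "connected W" unfolding W_def by (simp add: convex_connected convex_Int)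
    show "U holomorphic_on W" using Uh WR by (rule holomorphic_on_subset)
    show "Y holomorphic_on W" using Y(1) WX by (rule holomorphic_on_subset)
    show "\<And>z. z \<in> Os \<Longrightarrow> U z = Y z" by (rule UY)
    show "x \<in> W" by (rule that)
  qed
  have "(\<lambda>z. if z \<in> ball 0 R then U z else Y z) holomorphic_on (ball 0 R \<union> ball x0 \<delta>)"
    by (rule holomorphic_on_If_Un[OF Uh Yh]) (use UYW in \<open>auto simp: W_def\<close>)
  then show ?thesis using \<delta>(1) by (intro exI[of _ \<delta>] exI[of _ "\<lambda>z. if z \<in> ball 0 R then U z else Y z"]) auto
qed

lemma inv_seq_lim: "(\<lambda>n. 1 / (real n + 1)) \<longlonglongrightarrow> 0"
proof -
  have "(\<lambda>n. 1 / real n) \<longlonglongrightarrow> 0" by (rule lim_const_over_n)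
  then have "(\<lambda>n. 1 / real (n + 1)) \<longlonglongrightarrow> 0" by (rule LIMSEQ_ignore_initial_segment)
  then show ?thesis by (simp add: add.commute)
qed

lemma boundary_lemma:
  fixes \<gamma> b R :: real and U L :: "complex \<Rightarrow> complex"
  assumes g: "\<gamma> > 0" and b: "b > 0" and R: "R > 0"
    and Uh: "U holomorphic_on ball 0 R" and Lh: "L holomorphic_on ball 0 R"
    and rel: "\<forall>x\<in>ball 0 R. exp (L x) = 1 - of_real b * U x \<and> U x = x * (1 + of_real \<gamma> * U x * L x)"
    and x0: "norm x0 = R"
    and noext: "\<not> (\<exists>\<epsilon>>0. \<exists>g. g holomorphic_on (ball 0 R \<union> ball x0 \<epsilon>) \<and> (\<forall>x\<in>ball 0 R. g x = U x))"
  shows "\<exists>u0 Lu V xs.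
             u0 \<noteq> 0 \<and> u0 \<noteq> 1 / of_real b \<and>
             open V \<and> u0 \<in> V \<and> Lu holomorphic_on V \<and>
             (\<forall>w\<in>V. exp (Lu w) = 1 - of_real b * w) \<and>
             (\<forall>n. xs n \<in> ball 0 R) \<and>
             xs \<longlonglongrightarrow> x0 \<and> (\<lambda>n. U (xs n)) \<longlonglongrightarrow> u0 \<and>
             (\<lambda>n. L (xs n)) \<longlonglongrightarrow> Lu u0 \<and>
             (let X = (\<lambda>w. w / (1 + of_real \<gamma> * w * Lu w)) in
                X u0 = x0 \<and> x0 \<noteq> 0 \<and> (X has_field_derivative 0) (at u0))"
proof -
  obtain \<epsilon> where \<epsilon>: "\<epsilon> > 0" "\<forall>\<delta>>0. \<exists>x\<in>ball 0 R. norm (x - x0) < \<delta> \<and> norm (U x) \<ge> \<epsilon>"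
    using not_to_zero[OF g b R Uh Lh rel x0] by blast
  have "\<forall>n. \<exists>x. x \<in> ball 0 R \<and> norm (x - x0) < min (1 / (real n + 1)) (R / 2) \<and> norm (U x) \<ge> \<epsilon>"
  proof
    fix n :: nat
    have "min (1 / (real n + 1)) (R / 2) > 0" using R by simp
    then show "\<exists>x. x \<in> ball 0 R \<and> norm (x - x0) < min (1 / (real n + 1)) (R / 2) \<and> norm (U x) \<ge> \<epsilon>"
      using \<epsilon>(2) by blast
  qed
  then obtain xs where xsall: "\<forall>n. xs n \<in> ball 0 R \<and> norm (xs n - x0) < min (1 / (real n + 1)) (R / 2) \<and> norm (U (xs n)) \<ge> \<epsilon>"
    by (rule choice[THEN exE]) blast
  then have xs: "\<And>n. xs n \<in> ball 0 R" "\<And>n. norm (xs n - x0) < min (1 / (real n + 1)) (R / 2)"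
      "\<And>n. norm (U (xs n)) \<ge> \<epsilon>"
    by blast+
  have x00: "x0 \<noteq> 0" using x0 R by auto
  have xsbig: "norm (xs n) > R / 2" for n
  proof -
    have "norm x0 \<le> norm (xs n) + norm (xs n - x0)"
      using norm_triangle_sub[of x0 "xs n"] norm_minus_commute[of x0 "xs n"] by simp
    then show ?thesis using xs(2)[of n] x0 by linarith
  qed
  have xs0: "xs n \<noteq> 0" for n using xsbig[of n] R by auto
  have Uxs0: "U (xs n) \<noteq> 0" for n using xs(3)[of n] \<epsilon>(1) by auto
  have xslim: "xs \<longlonglongrightarrow> x0"
  proof (rule LIM_zero_cancel)
    show "(\<lambda>n. xs n - x0) \<longlonglongrightarrow> 0"
    proof (rule Lim_null_comparison)
      show "eventually (\<lambda>n. norm (xs n - x0) \<le> 1 / (real n + 1)) sequentially"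
        using xs(2) by (intro always_eventually) (auto intro: less_imp_le)
      show "(\<lambda>n. 1 / (real n + 1)) \<longlonglongrightarrow> 0" by (rule inv_seq_lim)
    qed
  qed
  have Lxs: "L (xs n) = (1 / xs n - 1 / U (xs n)) / of_real \<gamma>" for n
    using inv_formula[OF g xs0 Uxs0] rel xs(1) by blast
  define M where "M = (2 / R + 1 / \<epsilon>) / \<gamma>"
  have LM: "norm (L (xs n)) \<le> M" for n
  proof -
    have n0: "norm (xs n) > 0" using xsbig[of n] R by linarith
    have "R \<le> 2 * norm (xs n)" using xsbig[of n] by linarith
    then have "1 / norm (xs n) \<le> 2 / R" using n0 R by (simp add: field_simps)
    then have "norm (1 / xs n) \<le> 2 / R" by (simp add: norm_divide)
    moreover have "norm (1 / U (xs n)) \<le> 1 / \<epsilon>"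
    proof -
      have "1 / norm (U (xs n)) \<le> 1 / \<epsilon>" using xs(3)[of n] \<epsilon>(1)
      proof (intro divide_left_mono)
        have "0 < norm (U (xs n))" using xs(3)[of n] \<epsilon>(1) by linarith
        then show "0 < norm (U (xs n)) * \<epsilon>" using \<epsilon>(1) by simp
      qed (use xs(3)[of n] in auto)
      then show ?thesis by (simp add: norm_divide)
    qed
    ultimately have "norm (1 / xs n - 1 / U (xs n)) \<le> 2 / R + 1 / \<epsilon>"
      by (meson add_mono norm_triangle_ineq4 order_trans)
    then show ?thesis unfolding Lxs M_def using g by (simp add: norm_divide divide_right_mono)
  qed
  have UM: "norm (U (xs n)) \<le> (1 + exp M) / b" for n
  proof -
    have "exp (L (xs n)) = 1 - of_real b * U (xs n)" using rel xs(1)[of n] by blast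
    then have "norm (1 - of_real b * U (xs n)) = exp (Re (L (xs n)))"
      by (metis norm_exp_eq_Re)
    also have "\<dots> \<le> exp M" using LM[of n] complex_Re_le_cmod order_trans by auto
    finally have "norm (1 - of_real b * U (xs n)) \<le> exp M" .
    moreover have "norm (of_real b * U (xs n)) \<le> 1 + norm (1 - of_real b * U (xs n))"
    proof -
      have "norm (1 - (1 - of_real b * U (xs n))) \<le> norm (1::complex) + norm (1 - of_real b * U (xs n))"
        by (rule norm_triangle_ineq4)
      then show ?thesis by simp
    qed
    ultimately have "b * norm (U (xs n)) \<le> 1 + exp M" using b by (simp add: norm_mult)
    then show ?thesis using b by (simp add: field_simps)
  qed
  have "bounded (range (\<lambda>n. U (xs n)))"
    unfolding bounded_iff using UM by blast
  then obtain u0 r where r: "strict_mono r" "((\<lambda>n. U (xs n)) \<circ> r) \<longlonglongrightarrow> u0"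
    using bounded_imp_convergent_subsequence by blast
  define ys where "ys = xs \<circ> r"
  have ysR: "\<forall>n. ys n \<in> ball 0 R" unfolding ys_def using xs(1) by simp
  have yslim: "ys \<longlonglongrightarrow> x0" unfolding ys_def using LIMSEQ_subseq_LIMSEQ[OF xslim r(1)] .
  have Uys: "(\<lambda>n. U (ys n)) \<longlonglongrightarrow> u0" using r(2) unfolding ys_def by (simp add: o_def)
  have "norm u0 \<ge> \<epsilon>"
  proof (rule tendsto_le[OF trivial_limit_sequentially tendsto_norm[OF Uys] tendsto_const])
    show "eventually (\<lambda>n. \<epsilon> \<le> norm (U (ys n))) sequentially"
      using xs(3) unfolding ys_def by simp
  qed
  then have u00: "u0 \<noteq> 0" using \<epsilon>(1) by auto
  define l0 where "l0 = (1 / x0 - 1 / u0) / of_real \<gamma>"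
  have Lys: "(\<lambda>n. L (ys n)) \<longlonglongrightarrow> l0"
  proof -
    have "(\<lambda>n. (1 / ys n - 1 / U (ys n)) / of_real \<gamma>) \<longlonglongrightarrow> l0"
      unfolding l0_def using yslim Uys x00 u00 g by (intro tendsto_intros) auto
    moreover have "(\<lambda>n. L (ys n)) = (\<lambda>n. (1 / ys n - 1 / U (ys n)) / of_real \<gamma>)"
      unfolding ys_def using Lxs by simp
    ultimately show ?thesis by simp
  qed
  have "(\<lambda>n. exp (L (ys n))) \<longlonglongrightarrow> exp l0" using Lys by (rule tendsto_exp)
  moreover have "(\<lambda>n. exp (L (ys n))) \<longlonglongrightarrow> 1 - of_real b * u0"
  proof -
    have "(\<lambda>n. 1 - of_real b * U (ys n)) \<longlonglongrightarrow> 1 - of_real b * u0"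
      using Uys by (intro tendsto_intros)
    then show ?thesis using rel ysR by simp
  qed
  ultimately have el0: "exp l0 = 1 - of_real b * u0" by (rule LIMSEQ_unique)
  define a where "a = 1 - of_real b * u0"
  have a0: "a \<noteq> 0" using el0 unfolding a_def by (metis exp_not_eq_zero)
  have u0b: "u0 \<noteq> 1 / of_real b"
  proof
    assume "u0 = 1 / of_real b"
    then have "a = 0" unfolding a_def using b by simp
    with a0 show False by simp
  qed
  define V0 where "V0 = ball u0 (norm a / b)"
  define Lu where "Lu = (\<lambda>w. Ln ((1 - of_real b * w) / a) + l0)"
  have V0re: "Re ((1 - of_real b * w) / a) > 0" if "w \<in> V0" for w
  proof -
    have "(1 - of_real b * w) / a - 1 = of_real b * (u0 - w) / a"
      unfolding a_def using a0[unfolded a_def] by (simp add: field_simps)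
    moreover have "norm (of_real b * (u0 - w) / a) < 1"
    proof -
      have na: "norm a > 0" using a0 by simp
      have "dist u0 w < norm a / b" using that unfolding V0_def by simp
      then have "b * norm (u0 - w) < norm a" using b by (simp add: dist_norm field_simps)
      moreover have "norm (of_real b * (u0 - w) / a) = b * norm (u0 - w) / norm a"
        using b by (simp add: norm_divide norm_mult)
      ultimately show ?thesis using na by simp
    qed
    ultimately have "norm ((1 - of_real b * w) / a - 1) < 1" by simp
    moreover have "\<bar>Re ((1 - of_real b * w) / a - 1)\<bar> \<le> norm ((1 - of_real b * w) / a - 1)"
      by (rule abs_Re_le_cmod)
    ultimately have "Re ((1 - of_real b * w) / a - 1) > -1" by linarith
    then show ?thesis by simp
  qed
  have V0nn: "(1 - of_real b * w) / a \<notin> \<real>\<^sub>\<le>\<^sub>0" if "w \<in> V0" for w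
    using Re_pos_not_nonpos[OF V0re[OF that]] .
  have V0nz: "(1 - of_real b * w) / a \<noteq> 0" if "w \<in> V0" for w
    using V0re[OF that] by force
  have Luh0: "Lu holomorphic_on V0" unfolding Lu_def using V0nn
    by (intro holomorphic_intros) auto
  have Luexp0: "exp (Lu w) = 1 - of_real b * w" if "w \<in> V0" for w
    unfolding Lu_def using V0nz[OF that] a0 el0[folded a_def] by (simp add: exp_add)
  have Lu0: "Lu u0 = l0" unfolding Lu_def using a0 unfolding a_def by simp
  have u0V0: "u0 \<in> V0" unfolding V0_def using a0 b by simp
  have den0: "1 + of_real \<gamma> * u0 * l0 = u0 / x0"
    unfolding l0_def using g u00 x00 by (simp add: field_simps)
  define V where "V = V0 \<inter> (\<lambda>w. 1 + of_real \<gamma> * w * Lu w) -` (- {0})"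
  have cden: "continuous_on V0 (\<lambda>w. 1 + of_real \<gamma> * w * Lu w)"
    using holomorphic_on_imp_continuous_on[OF Luh0] by (intro continuous_intros)
  have oV: "open V" unfolding V_def
    by (rule continuous_open_preimage[OF cden]) (auto simp: V0_def)
  have u0V: "u0 \<in> V" unfolding V_def using u0V0 Lu0 den0 u00 x00 by simp
  have VV0: "V \<subseteq> V0" unfolding V_def by auto
  have Luh: "Lu holomorphic_on V" using Luh0 VV0 by (rule holomorphic_on_subset)
  have Luexp: "\<forall>w\<in>V. exp (Lu w) = 1 - of_real b * w" using Luexp0 VV0 by auto
  have den: "\<forall>w\<in>V. 1 + of_real \<gamma> * w * Lu w \<noteq> 0" unfolding V_def by auto
  define Xf where "Xf = (\<lambda>w. w / (1 + of_real \<gamma> * w * Lu w))"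
  have Xu0: "Xf u0 = x0" unfolding Xf_def using Lu0 den0 u00 x00 by simp
  have Xh: "Xf holomorphic_on V" unfolding Xf_def using Luh den by (intro holomorphic_intros) auto
  have Xd: "(Xf has_field_derivative deriv Xf u0) (at u0)"
    using holomorphic_derivI[OF Xh oV u0V] .
  have d0: "deriv Xf u0 = 0"
  proof (rule ccontr)
    assume "deriv Xf u0 \<noteq> 0"
    from extend_lemma[OF g b R Uh Lh rel ysR yslim Uys Lys oV u0V Luh Luexp Lu0 Xf_def den Xu0 this]
    show False using noext by blast
  qed
  show ?thesis
    apply (rule exI[of _ u0], rule exI[of _ Lu], rule exI[of _ V], rule exI[of _ ys])
    using u00 u0b oV u0V Luh Luexp ysR yslim Uys Lys Lu0 Xu0 x00 Xd d0
    unfolding Xf_def Let_def by auto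
qed

theorem proposition6p4:
  fixes \<gamma> b :: real and u :: "complex \<Rightarrow> complex"
  assumes "\<gamma> > 0" and "0 < b" and "b < 1"
    and "is_sol_germ \<gamma> b u"
  shows "\<exists>U L.
     U holomorphic_on edisc (analytic_radius u) \<and>
     (\<exists>\<delta>>0. \<forall>x\<in>ball 0 \<delta>. U x = u x) \<and>
     L holomorphic_on edisc (analytic_radius u) \<and> L 0 = 0 \<and>
     (\<forall>x\<in>edisc (analytic_radius u).
        1 - of_real b * U x \<noteq> 0 \<and>
        exp (L x) = 1 - of_real b * U x \<and>
        x = U x / (1 + of_real \<gamma> * U x * L x)) \<and>
     (analytic_radius u < \<infinity> \<longrightarrow>
       (\<forall>x0. ereal (cmod x0) = analytic_radius u \<and>
          \<not> (\<exists>\<epsilon>>0. \<exists>g. g holomorphic_on (edisc (analytic_radius u) \<union> ball x0 \<epsilon>) \<and>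
                (\<forall>x\<in>edisc (analytic_radius u). g x = U x))
        \<longrightarrow>
          (\<exists>u0 Lu V xs.
             u0 \<noteq> 0 \<and> u0 \<noteq> 1 / of_real b \<and>
             open V \<and> u0 \<in> V \<and> Lu holomorphic_on V \<and>
             (\<forall>w\<in>V. exp (Lu w) = 1 - of_real b * w) \<and>
             (\<forall>n. xs n \<in> edisc (analytic_radius u)) \<and>
             xs \<longlonglongrightarrow> x0 \<and> (\<lambda>n. U (xs n)) \<longlonglongrightarrow> u0 \<and>
             (\<lambda>n. L (xs n)) \<longlonglongrightarrow> Lu u0 \<and>
             (let X = (\<lambda>w. w / (1 + of_real \<gamma> * w * Lu w)) in
                X u0 = x0 \<and> x0 \<noteq> 0 \<and> (X has_field_derivative 0) (at u0)))))"
proof -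
  note g = assms(1) and b = assms(2)
  define \<rho> where "\<rho> = analytic_radius u"
  obtain U where pos: "\<rho> > 0" and Uh: "U holomorphic_on edisc \<rho>"
    and Uu: "\<exists>\<delta>>0. \<forall>x\<in>ball 0 \<delta>. U x = u x"
    using germ_continuation[OF assms(4)] unfolding \<rho>_def by blast
  obtain \<epsilon> where \<epsilon>: "\<epsilon> > 0" "u 0 = 0"
      "\<forall>x\<in>ball 0 \<epsilon>. u x = x * (1 + of_real \<gamma> * u x * Ln (1 - of_real b * u x))"
    using assms(4) unfolding is_sol_germ_def by blast
  obtain \<delta> where \<delta>: "\<delta> > 0" "\<forall>x\<in>ball 0 \<delta>. U x = u x" using Uu by blast
  have U0: "U 0 = 0" using \<delta> \<epsilon>(2) by simp
  have eq0: "\<exists>\<delta>>0. \<forall>x\<in>ball 0 \<delta>. U x = x * (1 + of_real \<gamma> * U x * Ln (1 - of_real b * U x))"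
    using \<delta> \<epsilon> by (intro exI[of _ "min \<delta> \<epsilon>"]) auto
  have nz: "\<forall>x\<in>edisc \<rho>. 1 - of_real b * U x \<noteq> 0"
    by (rule nonvanishing[OF g b Uh pos U0 eq0])
  obtain L where L: "L holomorphic_on edisc \<rho>" "L 0 = 0"
      "\<forall>x\<in>edisc \<rho>. exp (L x) = 1 - of_real b * U x \<and> U x = x * (1 + of_real \<gamma> * U x * L x)"
    using log_relation[OF b Uh edisc_convex edisc_open edisc_zero[OF pos] _ U0 eq0] nz by blast
  have rel2: "x = U x / (1 + of_real \<gamma> * U x * L x)" if "x \<in> edisc \<rho>" for x
  proof -
    have relx: "U x = x * (1 + of_real \<gamma> * U x * L x)" using L(3) that by blast
    have dn: "1 + of_real \<gamma> * U x * L x \<noteq> 0"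
    proof
      assume "1 + of_real \<gamma> * U x * L x = 0"
      then have "U x = 0" using relx by simp
      with \<open>1 + of_real \<gamma> * U x * L x = 0\<close> show False by simp
    qed
    show ?thesis using relx dn by (simp add: field_simps)
  qed
  have bnd: "\<forall>x0. ereal (cmod x0) = \<rho> \<and>
          \<not> (\<exists>\<epsilon>>0. \<exists>g. g holomorphic_on (edisc \<rho> \<union> ball x0 \<epsilon>) \<and>
                (\<forall>x\<in>edisc \<rho>. g x = U x))
        \<longrightarrow>
          (\<exists>u0 Lu V xs.
             u0 \<noteq> 0 \<and> u0 \<noteq> 1 / of_real b \<and>
             open V \<and> u0 \<in> V \<and> Lu holomorphic_on V \<and>
             (\<forall>w\<in>V. exp (Lu w) = 1 - of_real b * w) \<and>
             (\<forall>n. xs n \<in> edisc \<rho>) \<and>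
             xs \<longlonglongrightarrow> x0 \<and> (\<lambda>n. U (xs n)) \<longlonglongrightarrow> u0 \<and>
             (\<lambda>n. L (xs n)) \<longlonglongrightarrow> Lu u0 \<and>
             (let X = (\<lambda>w. w / (1 + of_real \<gamma> * w * Lu w)) in
                X u0 = x0 \<and> x0 \<noteq> 0 \<and> (X has_field_derivative 0) (at u0)))"
    if fin: "\<rho> < \<infinity>"
  proof (intro allI impI, elim conjE)
    fix x0 assume x0: "ereal (cmod x0) = \<rho>"
      and noext: "\<not> (\<exists>\<epsilon>>0. \<exists>g. g holomorphic_on (edisc \<rho> \<union> ball x0 \<epsilon>) \<and>
                (\<forall>x\<in>edisc \<rho>. g x = U x))"
    obtain R where R: "\<rho> = ereal R" using fin pos by (cases \<rho>) auto
    have Rpos: "R > 0" using pos R by simp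
    have D: "edisc \<rho> = ball 0 R" using R edisc_finite by simp
    have nx0: "norm x0 = R" using x0 R by simp
    show "\<exists>u0 Lu V xs.
             u0 \<noteq> 0 \<and> u0 \<noteq> 1 / of_real b \<and>
             open V \<and> u0 \<in> V \<and> Lu holomorphic_on V \<and>
             (\<forall>w\<in>V. exp (Lu w) = 1 - of_real b * w) \<and>
             (\<forall>n. xs n \<in> edisc \<rho>) \<and>
             xs \<longlonglongrightarrow> x0 \<and> (\<lambda>n. U (xs n)) \<longlonglongrightarrow> u0 \<and>
             (\<lambda>n. L (xs n)) \<longlonglongrightarrow> Lu u0 \<and>
             (let X = (\<lambda>w. w / (1 + of_real \<gamma> * w * Lu w)) in
                X u0 = x0 \<and> x0 \<noteq> 0 \<and> (X has_field_derivative 0) (at u0))"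
      unfolding D
      by (rule boundary_lemma[OF g b Rpos Uh[unfolded D] L(1)[unfolded D] L(3)[unfolded D] nx0 noext[unfolded D]])
  qed
  show ?thesis
    apply (rule exI[of _ U], rule exI[of _ L])
    using Uh Uu L nz rel2 bnd unfolding \<rho>_def by blast
qed

end
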